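(* Let $\vdash\subseteq Sqt$ satisfy (A), (Mon), (Cut), (Com), ($\wedge$I), ($\wedge$E), ($\to$0), ($\to$1), ($\to$2). For all $\varphi,\psi\in Form$ and $\Gamma\subseteq Form$, if $\Gamma\nvdash\varphi\to\psi$, then there is a $\vdash$-deduction closed $\Delta\subseteq Form$ such that $\varphi\in\Delta$, $\psi\notin\Delta$, $\Gamma R_\to\Delta$, and for every $\chi\notin\Delta$, $\psi\in\Gamma(\Delta,\chi)$.
   Context: $Form$: $\varphi::=p\mid\bot\mid(\varphi\wedge\varphi)\mid(\varphi\to\varphi)$ over a countable set $P0$ ($\wedge$ left-associative, binds tighter than $\to$). Sequents are pairs $(\Gamma,\varphi)$, $\Gamma\subseteq Form$; $\Gamma\vdash\varphi$ means $(\Gamma,\varphi)\in\vdash$, $\psi\vdash\varphi$ means $\{\psi\}\vdash\varphi$, $\vdash\varphi$ means $\emptyset\vdash\varphi$. Rules (for all $\Gamma,\Delta\subseteq Form$, formulas): (A) $\Gamma\cup\{\varphi\}\vdash\varphi$; (Mon) $\Gamma\subseteq\Delta$, $\Gamma\vdash\varphi\Rightarrow\Delta\vdash\varphi$; (Cut) $\Gamma\cup\{\psi\}\vdash\varphi$, $\Delta\vdash\psi\Rightarrow\Gamma\cup\Delta\vdash\varphi$; (Com) $\Gamma\vdash\varphi\Rightarrow\Gamma'\vdash\varphi$ for some finite $\Gamma'\subseteq\Gamma$; ($\wedge$I) $\{\varphi,\psi\}\vdash\varphi\wedge\psi$; ($\wedge$E) $\varphi\wedge\psi\vdash\varphi$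 and $\varphi\wedge\psi\vdash\psi$; ($\to$0) $\vdash\varphi\to\varphi$; ($\to$1) $\Gamma\vdash\varphi\Rightarrow\{\psi\to\chi:\chi\in\Gamma\}\vdash\psi\to\varphi$; ($\to$2) $\{\varphi\to\psi,\psi\to\chi\}\vdash\varphi\to\chi$. $\Delta$ is $\vdash$-deduction closed iff $\Delta\vdash\psi$ implies $\psi\in\Delta$. $\Gamma R_\to\Delta$ iff for all $\varphi,\psi$, $\varphi\to\psi\in\Gamma$ and $\varphi\in\Delta$ imply $\psi\in\Delta$. $\Gamma(\Delta,\chi)=\{\psi\in Form:$ there is $\alpha\in\Delta$ with $\Gamma\vdash\alpha\wedge\chi\to\psi\}$. *)

theory Defs
  imports Main "HOL-Library.Countable"
begin

datatype 'p form = Atom 'p | Bot | Conj "'p form" "'p form" | Imp "'p form" "'p form"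

type_synonym 'p cons = "'p form set \<Rightarrow> 'p form \<Rightarrow> bool"

definition rule_A :: "'p cons \<Rightarrow> bool" where
  "rule_A D \<longleftrightarrow> (\<forall>\<Gamma> \<phi>. D (\<Gamma> \<union> {\<phi>}) \<phi>)"
definition rule_Mon :: "'p cons \<Rightarrow> bool" where
  "rule_Mon D \<longleftrightarrow> (\<forall>\<Gamma> \<Delta> \<phi>. \<Gamma> \<subseteq> \<Delta> \<longrightarrow> D \<Gamma> \<phi> \<longrightarrow> D \<Delta> \<phi>)"
definition rule_Cut :: "'p cons \<Rightarrow> bool" where
  "rule_Cut D \<longleftrightarrow> (\<forall>\<Gamma> \<Delta> \<phi> \<psi>. D (\<Gamma> \<union> {\<psi>}) \<phi> \<longrightarrow> D \<Delta> \<psi> \<longrightarrow> D (\<Gamma> \<union> \<Delta>) \<phi>)"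
definition rule_Com :: "'p cons \<Rightarrow> bool" where
  "rule_Com D \<longleftrightarrow> (\<forall>\<Gamma> \<phi>. D \<Gamma> \<phi> \<longrightarrow> (\<exists>\<Gamma>'. finite \<Gamma>' \<and> \<Gamma>' \<subseteq> \<Gamma> \<and> D \<Gamma>' \<phi>))"
definition rule_ConjI :: "'p cons \<Rightarrow> bool" where
  "rule_ConjI D \<longleftrightarrow> (\<forall>\<phi> \<psi>. D {\<phi>, \<psi>} (Conj \<phi> \<psi>))"
definition rule_ConjE :: "'p cons \<Rightarrow> bool" where
  "rule_ConjE D \<longleftrightarrow> (\<forall>\<phi> \<psi>. D {Conj \<phi> \<psi>} \<phi> \<and> D {Conj \<phi> \<psi>} \<psi>)"
definition rule_Imp0 :: "'p cons \<Rightarrow> bool" where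
  "rule_Imp0 D \<longleftrightarrow> (\<forall>\<phi>. D {} (Imp \<phi> \<phi>))"
definition rule_Imp1 :: "'p cons \<Rightarrow> bool" where
  "rule_Imp1 D \<longleftrightarrow> (\<forall>\<Gamma> \<phi> \<psi>. D \<Gamma> \<phi> \<longrightarrow> D ((\<lambda>\<chi>. Imp \<psi> \<chi>) ` \<Gamma>) (Imp \<psi> \<phi>))"
definition rule_Imp2 :: "'p cons \<Rightarrow> bool" where
  "rule_Imp2 D \<longleftrightarrow> (\<forall>\<phi> \<psi> \<chi>. D {Imp \<phi> \<psi>, Imp \<psi> \<chi>} (Imp \<phi> \<chi>))"

definition ded_closed :: "'p cons \<Rightarrow> 'p form set \<Rightarrow> bool" where
  "ded_closed D \<Delta> \<longleftrightarrow> (\<forall>\<psi>. D \<Delta> \<psi> \<longrightarrow> \<psi> \<in> \<Delta>)"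

definition R_imp :: "'p form set \<Rightarrow> 'p form set \<Rightarrow> bool" where
  "R_imp \<Gamma> \<Delta> \<longleftrightarrow> (\<forall>\<phi> \<psi>. Imp \<phi> \<psi> \<in> \<Gamma> \<longrightarrow> \<phi> \<in> \<Delta> \<longrightarrow> \<psi> \<in> \<Delta>)"

definition gen_set :: "'p cons \<Rightarrow> 'p form set \<Rightarrow> 'p form set \<Rightarrow> 'p form \<Rightarrow> 'p form set" where
  "gen_set D \<Gamma> \<Delta> \<chi> = {\<psi>. \<exists>\<alpha>\<in>\<Delta>. D \<Gamma> (Imp (Conj \<alpha> \<chi>) \<psi>)}"

end

theory Submission
  imports Defs
begin

locale cs =
  fixes D :: "'p cons"
  assumes A: "rule_A D" and Mon: "rule_Mon D" and Cut: "rule_Cut D" and Com: "rule_Com D"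
    and CI: "rule_ConjI D" and CE: "rule_ConjE D" and I0: "rule_Imp0 D" and I1: "rule_Imp1 D"
    and I2: "rule_Imp2 D"
begin

lemma mem: "x \<in> S \<Longrightarrow> D S x"
  using A unfolding rule_A_def by (metis insert_absorb insert_is_Un sup_commute)

lemma mon: "D S x \<Longrightarrow> S \<subseteq> T \<Longrightarrow> D T x"
  using Mon unfolding rule_Mon_def by blast

lemma cut: "D (S \<union> {y}) x \<Longrightarrow> D T y \<Longrightarrow> D (S \<union> T) x"
  using Cut unfolding rule_Cut_def by blast

lemma cut_all: "finite F \<Longrightarrow> \<forall>x\<in>F. D S x \<Longrightarrow> D (F \<union> S) b \<Longrightarrow> D S b"
proof (induction F rule: finite_induct)
  case empty then show ?case by simp
next
  case (insert x F)
  have "D ((F \<union> S) \<union> {x}) b" using insert.prems(2) by (simp add: Un_ac)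
  moreover have "D S x" using insert.prems(1) by simp
  ultimately have "D ((F \<union> S) \<union> S) b" by (rule cut)
  then have "D (F \<union> S) b" by (simp add: Un_ac)
  moreover have "\<forall>x\<in>F. D S x" using insert.prems(1) by simp
  ultimately show ?case using insert.IH by simp
qed

lemma derive_all: "\<forall>x\<in>F. D S x \<Longrightarrow> D F b \<Longrightarrow> D S b"
proof -
  assume h: "\<forall>x\<in>F. D S x" "D F b"
  obtain F' where F': "finite F'" "F' \<subseteq> F" "D F' b" using Com h(2) unfolding rule_Com_def by meson
  then have "D (F' \<union> S) b" using mon[of F' b "F' \<union> S"] by simp
  moreover have "\<forall>x\<in>F'. D S x" using h(1) F'(2) by blast
  ultimately show ?thesis using cut_all F'(1) by simp
qed

lemma closure_closed: "ded_closed D {b. D S b}"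
  unfolding ded_closed_def
proof (intro allI impI)
  fix b assume "D {b. D S b} b"
  then show "b \<in> {b. D S b}" using derive_all[of "{b. D S b}" S b] by simp
qed

lemma ded_imp: "D {a} b \<Longrightarrow> D {} (Imp a b)"
proof -
  assume "D {a} b"
  then have "D ((\<lambda>\<chi>. Imp a \<chi>) ` {a}) (Imp a b)" using I1 unfolding rule_Imp1_def by blast
  then have "D ({} \<union> {Imp a a}) (Imp a b)" by simp
  moreover have "D {} (Imp a a)" using I0 unfolding rule_Imp0_def by blast
  ultimately have "D ({} \<union> {}) (Imp a b)" by (rule cut)
  then show ?thesis by simp
qed

lemma trans: "D S (Imp a b) \<Longrightarrow> D S (Imp b c) \<Longrightarrow> D S (Imp a c)"
proof -
  assume h: "D S (Imp a b)" "D S (Imp b c)"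
  have "D {Imp a b, Imp b c} (Imp a c)" using I2 unfolding rule_Imp2_def by blast
  moreover have "\<forall>x\<in>{Imp a b, Imp b c}. D S x" using h by simp
  ultimately show ?thesis using derive_all by blast
qed

lemma ce1: "D {Conj a b} a" and ce2: "D {Conj a b} b" using CE unfolding rule_ConjE_def by blast+

lemma ci: "D {a, b} (Conj a b)" using CI unfolding rule_ConjI_def by blast

lemma conj_in: "ded_closed D X \<Longrightarrow> a \<in> X \<Longrightarrow> b \<in> X \<Longrightarrow> Conj a b \<in> X"
proof -
  assume h: "ded_closed D X" "a \<in> X" "b \<in> X"
  have "\<forall>x\<in>{a, b}. D X x" using h mem by blast
  then have "D X (Conj a b)" using derive_all[OF _ ci] by blast
  then show ?thesis using h(1) unfolding ded_closed_def by blast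
qed

lemma fin_conj: "finite F \<Longrightarrow> F \<subseteq> X \<Longrightarrow> ded_closed D X \<Longrightarrow> c \<in> X \<Longrightarrow> \<exists>\<alpha>\<in>X. \<forall>x\<in>F. D {\<alpha>} x"
proof (induction F rule: finite_induct)
  case empty then show ?case by blast
next
  case (insert x F)
  then obtain \<alpha> where a: "\<alpha> \<in> X" "\<forall>y\<in>F. D {\<alpha>} y" by blast
  have "Conj \<alpha> x \<in> X" using conj_in[of X \<alpha> x] insert.prems a by simp
  moreover have "\<forall>y\<in>insert x F. D {Conj \<alpha> x} y"
  proof
    fix y assume "y \<in> insert x F"
    then show "D {Conj \<alpha> x} y"
    proof
      assume "y = x" then show ?thesis using ce2 by simp
    next
      assume "y \<in> F"
      then have "D {\<alpha>} y" using a by blast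
      then show ?thesis using derive_all[of "{\<alpha>}" "{Conj \<alpha> x}" y] ce1 by simp
    qed
  qed
  ultimately show ?case by blast
qed

end

theorem mainTheorem10:
  fixes D :: "('p::countable) cons"
  assumes "rule_A D" "rule_Mon D" "rule_Cut D" "rule_Com D" "rule_ConjI D" "rule_ConjE D"
    "rule_Imp0 D" "rule_Imp1 D" "rule_Imp2 D"
    and "\<not> D \<Gamma> (Imp \<phi> \<psi>)"
  shows "\<exists>\<Delta>. ded_closed D \<Delta> \<and> \<phi> \<in> \<Delta> \<and> \<psi> \<notin> \<Delta> \<and> R_imp \<Gamma> \<Delta> \<and>
           (\<forall>\<chi>. \<chi> \<notin> \<Delta> \<longrightarrow> \<psi> \<in> gen_set D \<Gamma> \<Delta> \<chi>)"
proof -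
  interpret cs D using assms(1-9) by unfold_locales
  have nd: "\<not> D \<Gamma> (Imp \<phi> \<psi>)" by fact
  define Fam where "Fam = {X. ded_closed D X \<and> \<phi> \<in> X \<and> (\<forall>\<alpha>\<in>X. \<not> D \<Gamma> (Imp \<alpha> \<psi>))}"
  have "{b. D {\<phi>} b} \<in> Fam"
  proof -
    have "\<forall>\<alpha>\<in>{b. D {\<phi>} b}. \<not> D \<Gamma> (Imp \<alpha> \<psi>)"
    proof (intro ballI notI)
      fix \<alpha> assume "\<alpha> \<in> {b. D {\<phi>} b}" "D \<Gamma> (Imp \<alpha> \<psi>)"
      then have "D {} (Imp \<phi> \<alpha>)" using ded_imp by simp
      then have "D \<Gamma> (Imp \<phi> \<alpha>)" using mon[of "{}" _ \<Gamma>] by simp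
      then show False using trans[OF _ \<open>D \<Gamma> (Imp \<alpha> \<psi>)\<close>] nd by blast
    qed
    then show ?thesis unfolding Fam_def using closure_closed mem by auto
  qed
  then have ne: "Fam \<noteq> {}" by blast
  have ch: "\<Union>C \<in> Fam" if "C \<noteq> {}" "subset.chain Fam C" for C
  proof -
    note th = that
    have sub: "C \<subseteq> Fam" using that(2) unfolding subset.chain_def by blast
    have "ded_closed D (\<Union>C)" unfolding ded_closed_def
    proof (intro allI impI)
      fix b assume "D (\<Union>C) b"
      then obtain F where F: "finite F" "F \<subseteq> \<Union>C" "D F b" using Com unfolding rule_Com_def by blast
      obtain B where "B \<in> C" "F \<subseteq> B" using finite_subset_Union_chain[OF F(1) F(2) th(1) th(2)] by blast
      then have DB: "D B b" using mon[OF F(3)] by simp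
      have "ded_closed D B" using \<open>B \<in> C\<close> sub unfolding Fam_def by blast
      then show "b \<in> \<Union>C" using \<open>B \<in> C\<close> DB unfolding ded_closed_def by blast
    qed
    then show ?thesis using sub that(1) unfolding Fam_def by blast
  qed
  obtain M where M: "M \<in> Fam" and max: "\<forall>X\<in>Fam. M \<subseteq> X \<longrightarrow> X = M"
    using subset_Zorn_nonempty[OF ne ch] by blast
  have Mc: "ded_closed D M" and Mphi: "\<phi> \<in> M" and Mn: "\<forall>\<alpha>\<in>M. \<not> D \<Gamma> (Imp \<alpha> \<psi>)"
    using M unfolding Fam_def by auto
  have gen: "\<exists>\<alpha>\<in>M. D \<Gamma> (Imp (Conj \<alpha> \<chi>) \<psi>)" if "\<chi> \<notin> M" for \<chi>
  proof -
    let ?X = "{b. D (M \<union> {\<chi>}) b}"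
    have "M \<subseteq> ?X" "\<chi> \<in> ?X" using mem by auto
    then have "?X \<noteq> M" using that by blast
    then have "?X \<notin> Fam" using max \<open>M \<subseteq> ?X\<close> by blast
    moreover have "ded_closed D ?X" "\<phi> \<in> ?X" using closure_closed mem Mphi by auto
    ultimately obtain \<beta> where b: "D (M \<union> {\<chi>}) \<beta>" "D \<Gamma> (Imp \<beta> \<psi>)" unfolding Fam_def by blast
    then obtain F where F: "finite F" "F \<subseteq> M \<union> {\<chi>}" "D F \<beta>" using Com unfolding rule_Com_def by blast
    obtain \<alpha> where a: "\<alpha> \<in> M" "\<forall>x\<in>F - {\<chi>}. D {\<alpha>} x"
      using fin_conj[of "F - {\<chi>}" M \<phi>] F Mc Mphi by blast
    have "\<forall>x\<in>F. D {Conj \<alpha> \<chi>} x"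
    proof
      fix x assume "x \<in> F"
      show "D {Conj \<alpha> \<chi>} x"
      proof (cases "x = \<chi>")
        case True then show ?thesis using ce2 by simp
      next
        case False
        then have "D {\<alpha>} x" using a \<open>x \<in> F\<close> by blast
        then show ?thesis using derive_all[of "{\<alpha>}" "{Conj \<alpha> \<chi>}" x] ce1 by simp
      qed
    qed
    then have "D {Conj \<alpha> \<chi>} \<beta>" using derive_all F(3) by blast
    then have "D {} (Imp (Conj \<alpha> \<chi>) \<beta>)" using ded_imp by simp
    then have "D \<Gamma> (Imp (Conj \<alpha> \<chi>) \<beta>)" using mon[of "{}" _ \<Gamma>] by simp
    then have "D \<Gamma> (Imp (Conj \<alpha> \<chi>) \<psi>)" using trans[OF _ b(2)] by simp
    then show ?thesis using a(1) by blast
  qed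
  have psi: "\<psi> \<notin> M"
  proof
    assume "\<psi> \<in> M"
    moreover have "D \<Gamma> (Imp \<psi> \<psi>)" using I0 mon[of "{}" "Imp \<psi> \<psi>" \<Gamma>] unfolding rule_Imp0_def by simp
    ultimately show False using Mn by blast
  qed
  have R: "R_imp \<Gamma> M" unfolding R_imp_def
  proof (intro allI impI)
    fix p q assume pq: "Imp p q \<in> \<Gamma>" "p \<in> M"
    show "q \<in> M"
    proof (rule ccontr)
      assume "q \<notin> M"
      then obtain \<alpha> where a: "\<alpha> \<in> M" "D \<Gamma> (Imp (Conj \<alpha> q) \<psi>)" using gen by blast
      have inM: "Conj \<alpha> p \<in> M" using conj_in[OF Mc a(1) pq(2)] .
      have 1: "D \<Gamma> (Imp (Conj \<alpha> p) \<alpha>)" using mon[OF ded_imp[OF ce1]] by simp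
      have 2: "D \<Gamma> (Imp (Conj \<alpha> p) q)"
        using trans[OF mon[OF ded_imp[OF ce2]] mem[OF pq(1)]] by simp
      have "D ((\<lambda>\<chi>. Imp (Conj \<alpha> p) \<chi>) ` {\<alpha>, q}) (Imp (Conj \<alpha> p) (Conj \<alpha> q))"
        using I1 ci unfolding rule_Imp1_def by blast
      then have "D \<Gamma> (Imp (Conj \<alpha> p) (Conj \<alpha> q))" using derive_all[of "{Imp (Conj \<alpha> p) \<alpha>, Imp (Conj \<alpha> p) q}" \<Gamma>] 1 2 by simp
      then have "D \<Gamma> (Imp (Conj \<alpha> p) \<psi>)" using trans[OF _ a(2)] by simp
      then show False using Mn inM by blast
    qed
  qed
  show ?thesis using Mc Mphi psi R gen unfolding gen_set_def by blast
qed

end
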